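(* If $\pi \in B_n$ then $\Psi^B([\pi]_B) = F^B_\pi$ and $\Psi^C([\pi]_B) = F^C_\pi$ and $\Psi^D([\pi]_D) = F^D_\pi$.
   Context: Let $\Bbbk$ be a field of characteristic zero. For a word $w=w_1\cdots w_m$ of positive integers with $\max(w)\le n$, $[w,n]$ is the linear endomorphism of the $\Bbbk$-span of all words sending a word $v$ of length $n$ to $v_{w_1}\cdots v_{w_m}$ and others to $0$; $\textbf{W}$ is their span, a graded bialgebra (degree $m$) with product $[v,m]\otimes[w,n]\mapsto[v\sqcup\!\sqcup(w\uparrow m),m+n]$ and coproduct $\Delta_\odot([w,n])=\sum_i[w_1\cdots w_i,n]\otimes[w_{i+1}\cdots w_m,n]$. $B_n$ is the group of signed permutations of $\{\pm1,\dots,\pm n\}$ generated by $s^B_1=(-1,1)$ and $s^B_i=(-i,-i+1)(i-1,i)$ ($2\le i\le n$); $D_n$ is generated by $s^D_1=s^B_1s^B_2s^B_1$, $s^D_i=s^B_i$ ($i\ge2$). For $\pi\in B_n$, $\mathcal{R}^B(\pi),\mathcal{R}^D(\pi)$ are the reduced words, $\ell^B(\pi),\ell^D(\pi)$ the lengths, $[\pi]_B=\sum_{w\in\mathcal{R}^B(\pi)}[w,n]$, $[\pi]_D=\sum_{w\in\mathcal{R}^D(\pi)}[w,n]$. For a word $w$, $\mathrm{Peak}(w)=\{i:1<i<\ell(w),\ w_{i-1}\le w_i>w_{i+1}\}$, $o_B(w)$ is the number of letters equal to $1$, $o_D(w)$ the number equal to $1$ or $2$; $\ell_0(\pi)=|\{1\le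 i\le n:\pi(i)<0\}|$. Define $F^B_\pi=\sum_{w\in\mathcal{R}^B(\pi)}\sum 2^{|\{i_1,\dots,i_l\}|-\ell_0(\pi)}x_{i_1}\cdots x_{i_l}$ ($l=\ell^B(\pi)$), the inner sum over $i_1\le\cdots\le i_l$ with $j\notin\mathrm{Peak}(w)$ whenever $i_{j-1}=i_j=i_{j+1}$; $F^C_\pi=2^{\ell_0(\pi)}F^B_\pi$; $F^D_\pi=\sum_{w\in\mathcal{R}^D(\pi)}\sum 2^{|\{i_1,\dots,i_l\}|-o_D(w)}x_{i_1}\cdots x_{i_l}$ ($l=\ell^D(\pi)$) with the same inner constraint. Let $\zeta_>$ (resp. $\zeta_\le$) send $[w,n]$ to $1$ if $w$ is strictly decreasing (resp. weakly increasing) and $0$ otherwise, $\zeta_{>|\le}=\nabla_\Bbbk\circ(\zeta_>\otimes\zeta_\le)\circ\Delta_\odot$, and $\Psi_{>|\le}(x)=\sum_\alpha(\zeta_{>|\le})_\alpha(x)M_\alpha$, where for $\alpha=(\alpha_1,\dots,\alpha_k)$, $(\zeta)_\alpha$ is the iterated coproduct, projection onto degrees $\alpha_1,\dots,\alpha_k$, $\zeta^{\otimes k}$, and multiplication. Set $\Psi^C=\Psi_{>|\le}$ and let $\Psi^B,\Psi^D:\textbf{W}\to\textsf{QSym}$ be linear with $\Psi^B([w,n])=2^{-o_B(w)}\Psi_{>|\le}([w,n])$ and $\Psi^D([w,n])=2^{-o_D(w)}\Psi_{>|\le}([w,n])$. *)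

theory Defs
  imports Main "HOL-Library.Multiset"
begin

text \<open>Signed permutations of {+-1,...,+-n} are represented as permutations of the
integers commuting with negation and fixing every integer outside {-n..n}.\<close>

definition signed_perms :: "nat \<Rightarrow> (int \<Rightarrow> int) set" where
  "signed_perms n = {\<pi>. bij \<pi> \<and> (\<forall>x. \<pi> (- x) = - \<pi> x) \<and> (\<forall>x. \<bar>x\<bar> > int n \<longrightarrow> \<pi> x = x)}"

definition swp :: "int \<Rightarrow> int \<Rightarrow> int \<Rightarrow> int" where
  "swp a b x = (if x = a then b else if x = b then a else x)"

definition sB :: "nat \<Rightarrow> int \<Rightarrow> int" where
  "sB i = (if i = 1 then swp (-1) 1
           else swp (- int i) (- int i + 1) \<circ> swp (int i - 1) (int i))"

definition sD :: "nat \<Rightarrow> int \<Rightarrow> int" where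
  "sD i = (if i = 1 then sB 1 \<circ> sB 2 \<circ> sB 1 else sB i)"

definition wprod :: "(nat \<Rightarrow> int \<Rightarrow> int) \<Rightarrow> nat list \<Rightarrow> int \<Rightarrow> int" where
  "wprod s w = foldr (\<lambda>i f. s i \<circ> f) w id"

definition coxlen :: "(nat \<Rightarrow> int \<Rightarrow> int) \<Rightarrow> nat \<Rightarrow> (int \<Rightarrow> int) \<Rightarrow> nat" where
  "coxlen s n \<pi> = (LEAST k. \<exists>w. set w \<subseteq> {1..n} \<and> wprod s w = \<pi> \<and> length w = k)"

definition redwords :: "(nat \<Rightarrow> int \<Rightarrow> int) \<Rightarrow> nat \<Rightarrow> (int \<Rightarrow> int) \<Rightarrow> nat list set" where
  "redwords s n \<pi> = {w. set w \<subseteq> {1..n} \<and> wprod s w = \<pi> \<and> length w = coxlen s n \<pi>}"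

abbreviation "lenB n \<pi> \<equiv> coxlen sB n \<pi>"
abbreviation "lenD n \<pi> \<equiv> coxlen sD n \<pi>"
abbreviation "RB n \<pi> \<equiv> redwords sB n \<pi>"
abbreviation "RD n \<pi> \<equiv> redwords sD n \<pi>"

definition ell0 :: "nat \<Rightarrow> (int \<Rightarrow> int) \<Rightarrow> nat" where
  "ell0 n \<pi> = card {i \<in> {1..int n}. \<pi> i < 0}"

definition oB :: "nat list \<Rightarrow> nat" where "oB w = count (mset w) 1"
definition oD :: "nat list \<Rightarrow> nat" where "oD w = count (mset w) 1 + count (mset w) 2"

definition lt :: "'a list \<Rightarrow> nat \<Rightarrow> 'a" where "lt w i = w ! (i - 1)"

definition Peak :: "nat list \<Rightarrow> nat set" where
  "Peak w = {i. 1 < i \<and> i < length w \<and> lt w (i - 1) \<le> lt w i \<and> lt w i > lt w (i + 1)}"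

text \<open>Since the maps [w,n] (max w <= n) are linearly independent, an element of W is
represented by its finitely supported coefficient function on pairs (w,n).\<close>
type_synonym 'k W = "nat list \<times> nat \<Rightarrow> 'k"

definition bracketB :: "nat \<Rightarrow> (int \<Rightarrow> int) \<Rightarrow> 'k::field_char_0 W" where
  "bracketB n \<pi> = (\<lambda>(w, m). if m = n \<and> w \<in> RB n \<pi> then 1 else 0)"

definition bracketD :: "nat \<Rightarrow> (int \<Rightarrow> int) \<Rightarrow> 'k::field_char_0 W" where
  "bracketD n \<pi> = (\<lambda>(w, m). if m = n \<and> w \<in> RD n \<pi> then 1 else 0)"

text \<open>A formal power series in x_1, x_2, ... is represented by its coefficient
function on monomials; a monomial x_{i_1}...x_{i_l} is the multiset {#i_1,...,i_l#}
(variables are indexed by positive integers).\<close>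
type_synonym 'k series = "nat multiset \<Rightarrow> 'k"

text \<open>Monomial quasisymmetric function
M_alpha = sum_{0 < i_1 < ... < i_k} x_{i_1}^{alpha_1} ... x_{i_k}^{alpha_k}.\<close>
definition Mqs :: "nat list \<Rightarrow> 'k::field_char_0 series" where
  "Mqs \<alpha> \<mu> = (if 0 \<notin># \<mu> \<and> \<alpha> = map (count \<mu>) (sorted_list_of_set (set_mset \<mu>)) then 1 else 0)"

definition compositions :: "nat \<Rightarrow> nat list set" where
  "compositions m = {\<alpha>. sum_list \<alpha> = m \<and> 0 \<notin> set \<alpha>}"

text \<open>zeta_> and zeta_<= on [w,n] (they do not depend on n).\<close>
definition zeta_gt :: "nat list \<Rightarrow> 'k::field_char_0" where
  "zeta_gt w = (if sorted_wrt (>) w then 1 else 0)"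

definition zeta_le :: "nat list \<Rightarrow> 'k::field_char_0" where
  "zeta_le w = (if sorted w then 1 else 0)"

text \<open>zeta_{>|<=} = nabla o (zeta_> (x) zeta_<=) o Delta, evaluated on [w,n].\<close>
definition zeta_gl :: "nat list \<Rightarrow> 'k::field_char_0" where
  "zeta_gl w = (\<Sum>i\<le>length w. zeta_gt (take i w) * zeta_le (drop i w))"

fun factors :: "nat list \<Rightarrow> 'a list \<Rightarrow> 'a list list" where
  "factors [] w = []"
| "factors (a # \<alpha>) w = take a w # factors \<alpha> (drop a w)"

text \<open>(zeta)_alpha([w,n]): iterated coproduct (deconcatenation into k factors),
projection onto degrees alpha_1,...,alpha_k, zeta on each factor, multiplication.\<close>
definition zeta_alpha :: "nat list \<Rightarrow> nat list \<Rightarrow> 'k::field_char_0" where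
  "zeta_alpha \<alpha> w = (if sum_list \<alpha> = length w then prod_list (map zeta_gl (factors \<alpha> w)) else 0)"

text \<open>Psi_{>|<=}([w,n]) = sum_alpha zeta_alpha([w,n]) M_alpha, coefficientwise
(only compositions of the degree of the monomial contribute to its coefficient).\<close>
definition Psi_basis :: "nat list \<Rightarrow> 'k::field_char_0 series" where
  "Psi_basis w \<mu> = (\<Sum>\<alpha>\<in>compositions (size \<mu>). zeta_alpha \<alpha> w * Mqs \<alpha> \<mu>)"

definition linext :: "(nat list \<Rightarrow> nat \<Rightarrow> 'k::field_char_0 series) \<Rightarrow> 'k W \<Rightarrow> 'k series" where
  "linext f X = (\<lambda>\<mu>. \<Sum>p\<in>{p. X p \<noteq> 0}. X p * f (fst p) (snd p) \<mu>)"

definition PsiC :: "'k::field_char_0 W \<Rightarrow> 'k series" where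
  "PsiC = linext (\<lambda>w n. Psi_basis w)"

definition PsiB :: "'k::field_char_0 W \<Rightarrow> 'k series" where
  "PsiB = linext (\<lambda>w n \<mu>. inverse (2 ^ oB w) * Psi_basis w \<mu>)"

definition PsiD :: "'k::field_char_0 W \<Rightarrow> 'k series" where
  "PsiD = linext (\<lambda>w n \<mu>. inverse (2 ^ oD w) * Psi_basis w \<mu>)"

definition adm :: "nat \<Rightarrow> nat list \<Rightarrow> nat multiset \<Rightarrow> nat list set" where
  "adm l w \<mu> = {is. length is = l \<and> sorted is \<and> (\<forall>i\<in>set is. 1 \<le> i) \<and> mset is = \<mu> \<and>
      (\<forall>j. 1 < j \<and> j < l \<and> lt is (j - 1) = lt is j \<and> lt is j = lt is (j + 1) \<longrightarrow> j \<notin> Peak w)}"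

definition FB :: "nat \<Rightarrow> (int \<Rightarrow> int) \<Rightarrow> 'k::field_char_0 series" where
  "FB n \<pi> \<mu> = (\<Sum>w\<in>RB n \<pi>. \<Sum>is\<in>adm (lenB n \<pi>) w \<mu>.
      (2::'k) powi (int (card (set is)) - int (ell0 n \<pi>)))"

definition FC :: "nat \<Rightarrow> (int \<Rightarrow> int) \<Rightarrow> 'k::field_char_0 series" where
  "FC n \<pi> \<mu> = 2 ^ ell0 n \<pi> * FB n \<pi> \<mu>"

definition FD :: "nat \<Rightarrow> (int \<Rightarrow> int) \<Rightarrow> 'k::field_char_0 series" where
  "FD n \<pi> \<mu> = (\<Sum>w\<in>RD n \<pi>. \<Sum>is\<in>adm (lenD n \<pi>) w \<mu>.
      (2::'k) powi (int (card (set is)) - int (oD w)))"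

end

theory Submission
  imports Defs
begin


fun trip :: "('a \<Rightarrow> 'a \<Rightarrow> 'a \<Rightarrow> bool) \<Rightarrow> 'a list \<Rightarrow> bool" where
  "trip P (x # y # z # r) = (P x y z \<and> trip P (y # z # r))"
| "trip P _ = True"

lemma trip_Cons2: "trip P (x # y # t) = ((t \<noteq> [] \<longrightarrow> P x y (hd t)) \<and> trip P (y # t))"
  by (cases t) auto

lemma trip_nth: "trip P xs \<longleftrightarrow> (\<forall>j. 0 < j \<and> j + 1 < length xs \<longrightarrow> P (xs ! (j - 1)) (xs ! j) (xs ! (j + 1)))"
proof (induction P xs rule: trip.induct)
  case (1 P x y z r)
  show ?case
  proof
    assume "trip P (x # y # z # r)"
    then have a: "P x y z" and b: "trip P (y # z # r)" by auto
    show "\<forall>j. 0 < j \<and> j + 1 < length (x # y # z # r) \<longrightarrow> P ((x # y # z # r) ! (j - 1)) ((x # y # z # r) ! j) ((x # y # z # r) ! (j + 1))"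
    proof (intro allI impI)
      fix j assume j: "0 < j \<and> j + 1 < length (x # y # z # r)"
      show "P ((x # y # z # r) ! (j - 1)) ((x # y # z # r) ! j) ((x # y # z # r) ! (j + 1))"
      proof (cases "j = 1")
        case True then show ?thesis using a by simp
      next
        case False
        then obtain k where k: "j = Suc k" "0 < k" using j by (cases j) auto
        have "P ((y # z # r) ! (k - 1)) ((y # z # r) ! k) ((y # z # r) ! (k + 1))"
          using b 1 j k by auto
        then show ?thesis using k by (cases k) auto
      qed
    qed
  next
    assume H: "\<forall>j. 0 < j \<and> j + 1 < length (x # y # z # r) \<longrightarrow> P ((x # y # z # r) ! (j - 1)) ((x # y # z # r) ! j) ((x # y # z # r) ! (j + 1))"
    have a: "P x y z" using H[rule_format, of 1] by simp
    have "\<forall>k. 0 < k \<and> k + 1 < length (y # z # r) \<longrightarrow> P ((y # z # r) ! (k - 1)) ((y # z # r) ! k) ((y # z # r) ! (k + 1))"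
    proof (intro allI impI)
      fix k assume k: "0 < k \<and> k + 1 < length (y # z # r)"
      have "P ((x # y # z # r) ! (Suc k - 1)) ((x # y # z # r) ! Suc k) ((x # y # z # r) ! (Suc k + 1))"
        using H[rule_format, of "Suc k"] k by simp
      then show "P ((y # z # r) ! (k - 1)) ((y # z # r) ! k) ((y # z # r) ! (k + 1))"
        using k by (cases k) auto
    qed
    then show "trip P (x # y # z # r)" using a 1 by simp
  qed
next
  case ("2_1" P) then show ?case by simp
next
  case ("2_2" P v) then show ?case by simp
next
  case ("2_3" P v va) then show ?case by (simp add: less_Suc_eq)
qed

lemma trip_append:
  assumes "\<forall>x\<in>set xs. \<forall>z\<in>set ys. \<forall>y. P x y z"
  shows "trip P (xs @ ys) = (trip P xs \<and> trip P ys)"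
  using assms
proof (induction xs)
  case Nil then show ?case by simp
next
  case (Cons x xs)
  show ?case
  proof (cases xs)
    case Nil
    then show ?thesis using Cons.prems by (cases ys; cases "tl ys") auto
  next
    case (Cons x2 xs2)
    have IH: "trip P (xs @ ys) = (trip P xs \<and> trip P ys)" using Cons.IH Cons.prems by auto
    show ?thesis using IH Cons.prems unfolding Cons
      by (cases xs2; cases ys) (auto simp: trip_Cons2)
  qed
qed

definition pf :: "nat list \<Rightarrow> bool" where
  "pf = trip (\<lambda>x y z. \<not> (x \<le> y \<and> y > z))"

definition Qp :: "nat \<times> nat \<Rightarrow> nat \<times> nat \<Rightarrow> nat \<times> nat \<Rightarrow> bool" where
  "Qp p q r = (fst p = fst q \<and> fst q = fst r \<longrightarrow> \<not> (snd p \<le> snd q \<and> snd q > snd r))"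

lemma trip_repl: "length u = a \<Longrightarrow> trip Qp (zip (replicate a c) u) = pf u"
  unfolding pf_def trip_nth by (auto simp: Qp_def)



lemma zeta_gt_Cons_Cons: "zeta_gt (x # y # t) = (if x > y then zeta_gt (y # t) else 0)"
proof -
  have T: "transp ((>)::nat\<Rightarrow>nat\<Rightarrow>bool)" by (auto simp: transp_def)
  show ?thesis unfolding zeta_gt_def sorted_wrt2[OF T] by simp
qed

lemma zeta_gt_Nil[simp]: "zeta_gt [] = 1" by (simp add: zeta_gt_def)
lemma zeta_gt_single[simp]: "zeta_gt [x] = 1" by (simp add: zeta_gt_def)
lemma zeta_le_Nil[simp]: "zeta_le [] = 1" by (simp add: zeta_le_def)

lemma pf_Cons_gt: "x > y \<Longrightarrow> pf (x # y # t) = pf (y # t)"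
  unfolding pf_def by (simp add: trip_Cons2)

lemma pf_Cons_le: "x \<le> y \<Longrightarrow> pf (x # y # t) = sorted (y # t)"
proof (induction t arbitrary: x y)
  case Nil then show ?case by (simp add: pf_def)
next
  case (Cons z t)
  show ?case
  proof (cases "y \<le> z")
    case True
    then show ?thesis using Cons.IH[of y z] Cons.prems unfolding pf_def by (auto simp: trip_Cons2 intro: order_trans)
  next
    case False
    then show ?thesis using Cons.prems unfolding pf_def by (auto simp: trip_Cons2)
  qed
qed

lemma zeta_gl_Cons:
  "zeta_gl (x # u) = zeta_le (x # u) + (\<Sum>i\<le>length u. zeta_gt (x # take i u) * zeta_le (drop i u))"
proof -
  have "zeta_gl (x # u) = (\<Sum>i\<le>Suc (length u). zeta_gt (take i (x # u)) * zeta_le (drop i (x # u)))"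
    by (simp add: zeta_gl_def)
  also have "\<dots> = zeta_le (x # u) + (\<Sum>i\<le>length u. zeta_gt (x # take i u) * zeta_le (drop i u))"
    by (subst sum.atMost_Suc_shift) simp
  finally show ?thesis .
qed

lemma zeta_gl_pf: "u \<noteq> [] \<Longrightarrow> zeta_gl u = (if pf u then 2 else (0::'k::field_char_0))"
proof (induction u)
  case Nil then show ?case by simp
next
  case (Cons x u)
  show ?case
  proof (cases u)
    case Nil
    then show ?thesis by (simp add: zeta_gl_def zeta_gt_def zeta_le_def pf_def)
  next
    case (Cons y v)
    show ?thesis
    proof (cases "x > y")
      case True
      have "(zeta_gl (x # u)::'k) = (\<Sum>i\<le>length u. zeta_gt (x # take i u) * zeta_le (drop i u))"
        using True Cons by (simp add: zeta_gl_Cons zeta_le_def)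
      also have "\<dots> = (\<Sum>i\<le>length u. zeta_gt (take i u) * zeta_le (drop i u))"
      proof (rule sum.cong[OF refl])
        fix i assume "i \<in> {..length u}"
        show "zeta_gt (x # take i u) * zeta_le (drop i u) = (zeta_gt (take i u) * zeta_le (drop i u) :: 'k)"
          using True Cons by (cases i) (auto simp: zeta_gt_Cons_Cons)
      qed
      also have "\<dots> = zeta_gl u" by (simp add: zeta_gl_def)
      finally show ?thesis using Cons.IH Cons True pf_Cons_gt by auto
    next
      case False
      have "(\<Sum>i\<le>length u. zeta_gt (x # take i u) * zeta_le (drop i u)) = (zeta_le u :: 'k)"
      proof -
        have "(\<Sum>i\<le>length u. zeta_gt (x # take i u) * zeta_le (drop i u)) =
           zeta_gt [x] * zeta_le u + (\<Sum>i<length u. zeta_gt (x # take (Suc i) u) * (zeta_le (drop (Suc i) u)::'k))"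
          by (subst sum.atMost_shift) simp
        also have "(\<Sum>i<length u. zeta_gt (x # take (Suc i) u) * (zeta_le (drop (Suc i) u)::'k)) = 0"
          by (rule sum.neutral) (use False Cons in \<open>auto simp: zeta_gt_Cons_Cons\<close>)
        finally show ?thesis by simp
      qed
      then have "zeta_gl (x # u) = zeta_le (x # u) + (zeta_le u :: 'k)" by (simp add: zeta_gl_Cons)
      then show ?thesis using False Cons pf_Cons_le[of x y v] by (auto simp: zeta_le_def intro: order_trans)
    qed
  qed
qed

lemma prod_factors:
  assumes "0 \<notin> set \<alpha>" "sum_list \<alpha> = length w"
  shows "prod_list (map zeta_gl (factors \<alpha> w)) =
     (if \<forall>u\<in>set (factors \<alpha> w). pf u then 2 ^ length \<alpha> else (0::'k::field_char_0))"
  using assms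
proof (induction \<alpha> arbitrary: w)
  case Nil then show ?case by simp
next
  case (Cons a \<alpha>)
  have ne: "take a w \<noteq> []" using Cons.prems by auto
  have IH: "prod_list (map zeta_gl (factors \<alpha> (drop a w))) =
     (if \<forall>u\<in>set (factors \<alpha> (drop a w)). pf u then 2 ^ length \<alpha> else (0::'k))"
    using Cons by auto
  show ?case using IH zeta_gl_pf[OF ne, where 'k='k] by auto
qed



lemma sorted_block:
  assumes "sorted is" "is \<noteq> []"
  shows "\<exists>a r. 0 < a \<and> is = replicate a (hd is) @ r \<and> (\<forall>y\<in>set r. hd is < y) \<and> sorted r"
  using assms
proof (induction "is")
  case Nil then show ?case by simp
next
  case (Cons x t)
  show ?case
  proof (cases t)
    case Nil then show ?thesis by (intro exI[of _ 1] exI[of _ "[]"]) simp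
  next
    case (Cons y t')
    obtain a r where ar: "0 < a" "t = replicate a y @ r" "\<forall>z\<in>set r. y < z" "sorted r"
      using Cons.IH Cons.prems Cons by auto
    have xy: "x \<le> y" using Cons.prems Cons by auto
    show ?thesis
    proof (cases "x = y")
      case True
      then show ?thesis using ar by (intro exI[of _ "Suc a"] exI[of _ r]) simp
    next
      case False
      have "\<forall>z\<in>set t. y \<le> z" using Cons.prems Cons by auto
      then have "\<forall>z\<in>set t. x < z" using xy False by fastforce
      then show ?thesis using Cons.prems by (intro exI[of _ 1] exI[of _ t]) auto
    qed
  qed
qed

lemma sorted_block_induct[consumes 1, case_names Nil block]:
  assumes "sorted is"
    and "P []"
    and "\<And>a c r. 0 < a \<Longrightarrow> (\<forall>y\<in>set r. c < y) \<Longrightarrow> sorted r \<Longrightarrow> P r \<Longrightarrow> P (replicate a c @ r)"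
  shows "P is"
  using assms(1)
proof (induction "length is" arbitrary: "is" rule: less_induct)
  case less
  show ?case
  proof (cases "is = []")
    case True then show ?thesis using assms(2) by simp
  next
    case False
    then obtain a r where ar: "0 < a" "is = replicate a (hd is) @ r" "\<forall>y\<in>set r. hd is < y" "sorted r"
      using sorted_block[OF less.prems] by blast
    have "length r < length is" using ar by (metis length_append length_replicate less_add_same_cancel2)
    then have "P r" using less.hyps ar by blast
    then show ?thesis using assms(3)[OF ar(1) ar(3) ar(4)] ar(2) by metis
  qed
qed

definition rl :: "nat list \<Rightarrow> nat list" where
  "rl is = map (count (mset is)) (sorted_list_of_set (set is))"

lemma rl_Nil[simp]: "rl [] = []" by (simp add: rl_def)

lemma rl_block:
  assumes "0 < a" "\<forall>y\<in>set r. c < y"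
  shows "rl (replicate a c @ r) = a # rl r"
proof -
  have S: "set (replicate a c @ r) = insert c (set r)" using assms by auto
  have M: "Min (insert c (set r)) = c" using assms by (intro Min_eqI) auto
  have cr: "c \<notin> set r" using assms by auto
  have "sorted_list_of_set (insert c (set r)) = c # sorted_list_of_set (set r)"
    using sorted_list_of_set_nonempty[of "insert c (set r)"] M cr by simp
  moreover have "count (mset (replicate a c @ r)) c = a" using cr by (simp add: count_eq_zero_iff)
  moreover have "\<forall>y\<in>set r. count (mset (replicate a c @ r)) y = count (mset r) y" using cr by auto
  ultimately show ?thesis unfolding rl_def S by simp
qed

lemma rl_props:
  assumes "sorted is"
  shows "sum_list (rl is) = length is \<and> 0 \<notin> set (rl is) \<and> length (rl is) = card (set is)"
proof -
  have "sum_list (rl is) = length is \<and> 0 \<notin> set (rl is)"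
    using assms
  proof (induction "is" rule: sorted_block_induct)
    case Nil then show ?case by simp
  next
    case (block a c r) then show ?case by (simp add: rl_block)
  qed
  then show ?thesis by (simp add: rl_def)
qed

lemma main_M:
  assumes "sorted is" 
  shows "length is = length w \<Longrightarrow> trip Qp (zip is w) = (\<forall>u\<in>set (factors (rl is) w). pf u)"
  using assms
proof (induction "is" arbitrary: w rule: sorted_block_induct)
  case Nil then show ?case by simp
next
  case (block a c r)
  have la: "a \<le> length w" using block by simp
  have Z: "zip (replicate a c @ r) w = zip (replicate a c) (take a w) @ zip r (drop a w)"
  proof -
    have "zip (replicate a c @ r) (take a w @ drop a w) = zip (replicate a c) (take a w) @ zip r (drop a w)"
      using la by (intro zip_append) simp
    then show ?thesis by simp
  qed
  have sep: "\<forall>x\<in>set (zip (replicate a c) (take a w)). \<forall>z\<in>set (zip r (drop a w)). \<forall>y. Qp x y z"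
  proof (intro ballI allI)
    fix x z y assume x: "x \<in> set (zip (replicate a c) (take a w))" and z: "z \<in> set (zip r (drop a w))"
    have "fst x \<in> set (replicate a c)" using set_zip_leftD[of "fst x" "snd x"] x by (metis prod.collapse)
    then have "fst x = c" by simp
    moreover have "fst z \<in> set r" using set_zip_leftD[of "fst z" "snd z"] z by (metis prod.collapse)
    ultimately show "Qp x y z" using block(2) by (auto simp: Qp_def)
  qed
  have "trip Qp (zip (replicate a c @ r) w) = (pf (take a w) \<and> trip Qp (zip r (drop a w)))"
    unfolding Z trip_append[OF sep] using la by (simp add: trip_repl)
  also have "trip Qp (zip r (drop a w)) = (\<forall>u\<in>set (factors (rl r) (drop a w)). pf u)"
    using block by simp
  finally show ?case using rl_block[OF block(1) block(2)] by simp
qed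



lemma len_le_sum: "0 \<notin> set \<alpha> \<Longrightarrow> length \<alpha> \<le> sum_list (\<alpha>::nat list)"
  by (induction \<alpha>) auto

lemma comps_finite: "finite (compositions m)"
proof (rule finite_subset)
  show "compositions m \<subseteq> {\<alpha>. set \<alpha> \<subseteq> {0..m} \<and> length \<alpha> \<le> m}"
    unfolding compositions_def using len_le_sum member_le_sum_list by fastforce
  show "finite {\<alpha>. set \<alpha> \<subseteq> {0..m} \<and> length \<alpha> \<le> m}"
    by (rule finite_lists_length_le) simp
qed

lemma adm_cond:
  assumes "length is = length w"
  shows "(\<forall>j. 1 < j \<and> j < length w \<and> lt is (j - 1) = lt is j \<and> lt is j = lt is (j + 1) \<longrightarrow> j \<notin> Peak w)
     = trip Qp (zip is w)"
proof
  assume H: "\<forall>j. 1 < j \<and> j < length w \<and> lt is (j - 1) = lt is j \<and> lt is j = lt is (j + 1) \<longrightarrow> j \<notin> Peak w"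
  show "trip Qp (zip is w)"
    unfolding trip_nth
  proof (intro allI impI)
    fix j assume j: "0 < j \<and> j + 1 < length (zip is w)"
    have "1 < j + 1 \<and> j + 1 < length w \<and> lt is (j + 1 - 1) = lt is (j + 1) \<and> lt is (j + 1) = lt is (j + 1 + 1) \<longrightarrow> j + 1 \<notin> Peak w"
      using H by blast
    then show "Qp (zip is w ! (j - 1)) (zip is w ! j) (zip is w ! (j + 1))"
      using j assms by (auto simp: Qp_def lt_def Peak_def)
  qed
next
  assume H: "trip Qp (zip is w)"
  show "\<forall>j. 1 < j \<and> j < length w \<and> lt is (j - 1) = lt is j \<and> lt is j = lt is (j + 1) \<longrightarrow> j \<notin> Peak w"
  proof (intro allI impI)
    fix j assume j: "1 < j \<and> j < length w \<and> lt is (j - 1) = lt is j \<and> lt is j = lt is (j + 1)"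
    have "Qp (zip is w ! (j - 1 - 1)) (zip is w ! (j - 1)) (zip is w ! (j - 1 + 1))"
      using H[unfolded trip_nth, rule_format, of "j - 1"] j assms by simp
    then have "Qp (zip is w ! (j - 2)) (zip is w ! (j - 1)) (zip is w ! j)"
      using j by (simp add: numeral_2_eq_2)
    then show "j \<notin> Peak w" using j assms
      by (auto simp: Qp_def lt_def Peak_def numeral_2_eq_2)
  qed
qed

lemma adm_eq:
  fixes \<mu> :: "nat multiset"
  defines "xs \<equiv> sorted_list_of_multiset \<mu>"
  shows "adm (length w) w \<mu> = (if length xs = length w \<and> 0 \<notin># \<mu> \<and> trip Qp (zip xs w) then {xs} else {})"
proof -
  have sx: "sorted xs" and mx: "mset xs = \<mu>" unfolding xs_def by auto
  have uniq: "is = xs" if "sorted is" "mset is = \<mu>" for "is"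
  proof -
    have "sort xs = is" using properties_for_sort[of "is" xs] that mx by simp
    then show ?thesis using sx by (simp add: sorted_sort_id)
  qed
  have pos: "(\<forall>i\<in>set xs. 1 \<le> i) = (0 \<notin># \<mu>)"
  proof -
    have "set xs = set_mset \<mu>" using mx by (metis set_mset_mset)
    moreover have "(\<forall>i\<in>A. 1 \<le> (i::nat)) = (0 \<notin> A)" for A
    proof
      assume "\<forall>i\<in>A. 1 \<le> (i::nat)" then show "0 \<notin> A" by fastforce
    next
      assume z: "0 \<notin> A"
      show "\<forall>i\<in>A. 1 \<le> (i::nat)"
      proof
        fix i assume "i \<in> A" then have "i \<noteq> 0" using z by (cases i) auto
        then show "1 \<le> i" by simp
      qed
    qed
    ultimately show ?thesis by simp
  qed
  have mem: "is \<in> adm (length w) w \<mu> \<longleftrightarrow> (is = xs \<and> length xs = length w \<and> 0 \<notin># \<mu> \<and> trip Qp (zip xs w))" for "is"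
  proof
    assume a: "is \<in> adm (length w) w \<mu>"
    have l: "length is = length w" and s: "sorted is" and p: "\<forall>i\<in>set is. 1 \<le> i" and m: "mset is = \<mu>"
      and c: "\<forall>j. 1 < j \<and> j < length w \<and> lt is (j - 1) = lt is j \<and> lt is j = lt is (j + 1) \<longrightarrow> j \<notin> Peak w"
      using a unfolding adm_def by simp_all
    have e: "is = xs" using uniq s m by blast
    show "is = xs \<and> length xs = length w \<and> 0 \<notin># \<mu> \<and> trip Qp (zip xs w)"
      using e l p pos c adm_cond[of xs w] by simp
  next
    assume a: "is = xs \<and> length xs = length w \<and> 0 \<notin># \<mu> \<and> trip Qp (zip xs w)"
    have c: "\<forall>j. 1 < j \<and> j < length w \<and> lt xs (j - 1) = lt xs j \<and> lt xs j = lt xs (j + 1) \<longrightarrow> j \<notin> Peak w"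
      using a adm_cond[of xs w] by simp
    show "is \<in> adm (length w) w \<mu>"
      unfolding adm_def using a c sx mx pos by simp
  qed
  show ?thesis using mem by auto
qed

lemma key_K:
  fixes \<mu> :: "nat multiset"
  shows "finite (adm (length w) w \<mu>) \<and>
    Psi_basis w \<mu> = (\<Sum>is\<in>adm (length w) w \<mu>. (2::'k::field_char_0) ^ card (set is))"
proof -
  define xs where "xs = sorted_list_of_multiset \<mu>"
  have sx: "sorted xs" and mx: "mset xs = \<mu>" unfolding xs_def by auto
  have A: "adm (length w) w \<mu> = (if length xs = length w \<and> 0 \<notin># \<mu> \<and> trip Qp (zip xs w) then {xs} else {})"
    unfolding xs_def by (rule adm_eq)
  have rp: "sum_list (rl xs) = length xs \<and> 0 \<notin> set (rl xs) \<and> length (rl xs) = card (set xs)"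
    using rl_props[OF sx] .
  have a0: "map (count \<mu>) (sorted_list_of_set (set_mset \<mu>)) = rl xs"
    unfolding rl_def using mx by auto
  have Mq: "Mqs \<alpha> \<mu> = (if \<alpha> = rl xs then (if 0 \<notin># \<mu> then 1 else 0) else (0::'k))" for \<alpha>
    unfolding Mqs_def a0 by auto
  have inC: "rl xs \<in> compositions (size \<mu>)"
    using rp mx unfolding compositions_def by auto
  have "Psi_basis w \<mu> = (\<Sum>\<alpha>\<in>compositions (size \<mu>). if \<alpha> = rl xs then zeta_alpha (rl xs) w * (if 0 \<notin># \<mu> then 1 else 0) else (0::'k))"
    unfolding Psi_basis_def by (rule sum.cong) (auto simp: Mq)
  also have "\<dots> = zeta_alpha (rl xs) w * (if 0 \<notin># \<mu> then 1 else 0)"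
    using inC comps_finite by (simp add: sum.delta)
  also have "\<dots> = (if length xs = length w \<and> 0 \<notin># \<mu> \<and> trip Qp (zip xs w) then 2 ^ card (set xs) else 0)"
  proof (cases "length xs = length w")
    case True
    have "zeta_alpha (rl xs) w = (if \<forall>u\<in>set (factors (rl xs) w). pf u then 2 ^ length (rl xs) else (0::'k))"
      unfolding zeta_alpha_def using rp True prod_factors[of "rl xs" w] by auto
    then show ?thesis using main_M[OF sx True] rp True by auto
  next
    case False
    then show ?thesis unfolding zeta_alpha_def using rp by auto
  qed
  finally show ?thesis using A by simp
qed



definition PP :: "nat \<Rightarrow> (int \<times> int) set" where
  "PP n = {(x, y). 1 \<le> x \<and> x < y \<and> y \<le> int n}"

definition Iv :: "(int \<Rightarrow> int) \<Rightarrow> int \<times> int \<Rightarrow> int" where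
  "Iv \<pi> p = (if \<pi> (fst p) > \<pi> (snd p) then 1 else 0)"

definition Hv :: "(int \<Rightarrow> int) \<Rightarrow> int \<times> int \<Rightarrow> int" where
  "Hv \<pi> p = (if \<pi> (fst p) + \<pi> (snd p) < 0 then 1 else 0)"

definition AA :: "nat \<Rightarrow> (int \<Rightarrow> int) \<Rightarrow> int" where
  "AA n \<pi> = (\<Sum>p\<in>PP n. Iv \<pi> p + Hv \<pi> p)"

definition NN :: "nat \<Rightarrow> (int \<Rightarrow> int) \<Rightarrow> int" where
  "NN n \<pi> = (\<Sum>i\<in>{1..int n}. if \<pi> i < 0 then 1 else 0)"

definition LL :: "nat \<Rightarrow> (int \<Rightarrow> int) \<Rightarrow> int" where
  "LL n \<pi> = AA n \<pi> + NN n \<pi>"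

lemma PP_finite: "finite (PP n)"
proof (rule finite_subset)
  show "PP n \<subseteq> {1..int n} \<times> {1..int n}" unfolding PP_def by auto
qed simp

lemma NN_ell0: "NN n \<pi> = int (ell0 n \<pi>)"
proof -
  have e: "(\<Sum>i\<in>{i \<in> {1..int n}. \<pi> i < 0}. (1::int)) = NN n \<pi>"
    unfolding NN_def by (rule sum.inter_filter) simp
  have f: "int (ell0 n \<pi>) = (\<Sum>i\<in>{i \<in> {1..int n}. \<pi> i < 0}. (1::int))"
    unfolding ell0_def by simp
  show ?thesis using e f by simp
qed

lemma AA_nonneg: "AA n \<pi> \<ge> 0"
  unfolding AA_def Iv_def Hv_def by (intro sum_nonneg) auto

lemma NN_nonneg: "NN n \<pi> \<ge> 0"
  unfolding NN_def by (intro sum_nonneg) auto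

lemma LL_nonneg: "LL n \<pi> \<ge> 0"
  unfolding LL_def using AA_nonneg NN_nonneg by (simp add: add_nonneg_nonneg)

lemma LL_id: "LL n id = 0"
proof -
  have "AA n id = 0" unfolding AA_def by (rule sum.neutral) (auto simp: PP_def Iv_def Hv_def)
  moreover have "NN n id = 0" unfolding NN_def by (rule sum.neutral) auto
  ultimately show ?thesis by (simp add: LL_def)
qed

lemma AA_s1:
  assumes "\<pi>' 1 = - \<pi> 1" "\<forall>x\<in>{2..int n}. \<pi>' x = \<pi> x"
  shows "AA n \<pi>' = AA n \<pi>"
  unfolding AA_def
proof (rule sum.cong[OF refl])
  fix p assume p: "p \<in> PP n"
  obtain x y where xy: "p = (x, y)" by (cases p)
  have y: "\<pi>' y = \<pi> y" using p xy assms(2) by (auto simp: PP_def)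
  show "Iv \<pi>' p + Hv \<pi>' p = Iv \<pi> p + Hv \<pi> p"
  proof (cases "x = 1")
    case True
    then show ?thesis using xy y assms(1) by (auto simp: Iv_def Hv_def)
  next
    case False
    then have "\<pi>' x = \<pi> x" using p xy assms(2) by (auto simp: PP_def)
    then show ?thesis using xy y by (simp add: Iv_def Hv_def)
  qed
qed

lemma NN_s1:
  assumes "1 \<le> n" "\<pi>' 1 = - \<pi> 1" "\<forall>x\<in>{2..int n}. \<pi>' x = \<pi> x"
  shows "NN n \<pi>' = NN n \<pi> - (if \<pi> 1 < 0 then 1 else 0) + (if \<pi> 1 > 0 then 1 else 0)"
proof -
  have m: "1 \<in> {1..int n}" using assms by auto
  have r: "{1..int n} - {1} = {2..int n}" by auto
  have "NN n \<pi>' = (if \<pi>' 1 < 0 then 1 else 0) + (\<Sum>i\<in>{2..int n}. if \<pi>' i < 0 then 1 else 0)"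
    unfolding NN_def using sum.remove[OF _ m, of "\<lambda>i. if \<pi>' i < 0 then 1 else (0::int)"] r by simp
  also have "(\<Sum>i\<in>{2..int n}. if \<pi>' i < 0 then 1 else (0::int)) = (\<Sum>i\<in>{2..int n}. if \<pi> i < 0 then 1 else 0)"
    using assms(3) by (intro sum.cong) auto
  also have "NN n \<pi> = (if \<pi> 1 < 0 then 1 else 0) + (\<Sum>i\<in>{2..int n}. if \<pi> i < 0 then 1 else 0)"
    unfolding NN_def using sum.remove[OF _ m, of "\<lambda>i. if \<pi> i < 0 then 1 else (0::int)"] r by simp
  ultimately show ?thesis using assms(2) by auto
qed

lemma swp_order:
  assumes "x < y" "(x, y) \<noteq> (a, a + 1)"
  shows "swp a (a + 1) x < swp a (a + 1) y"
  using assms unfolding swp_def by auto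

definition sig :: "int \<Rightarrow> int \<times> int \<Rightarrow> int \<times> int" where
  "sig a p = (min (swp a (a + 1) (fst p)) (swp a (a + 1) (snd p)), max (swp a (a + 1) (fst p)) (swp a (a + 1) (snd p)))"

lemma swp_range: "1 \<le> a \<Longrightarrow> a + 1 \<le> int n \<Longrightarrow> x \<in> {1..int n} \<Longrightarrow> swp a (a + 1) x \<in> {1..int n}"
  unfolding swp_def by auto

lemma swp_inv: "swp a b (swp a b x) = x"
  unfolding swp_def by auto

lemma swp_inj: "swp a b x = swp a b y \<Longrightarrow> x = y"
  by (metis swp_inv)

lemma sig_PP: 
  assumes "1 \<le> a" "a + 1 \<le> int n" "p \<in> PP n"
  shows "sig a p \<in> PP n \<and> sig a (sig a p) = p"
proof -
  obtain x y where xy: "p = (x, y)" "1 \<le> x" "x < y" "y \<le> int n" using assms(3) unfolding PP_def by auto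
  let ?t = "swp a (a + 1)"
  have r: "?t x \<in> {1..int n}" "?t y \<in> {1..int n}" using swp_range[OF assms(1,2)] xy by auto
  have ne: "?t x \<noteq> ?t y" using swp_inj[of a "a + 1" x y] xy by auto
  have 1: "sig a p \<in> PP n" using r ne xy unfolding sig_def PP_def by auto
  have 2: "sig a (sig a p) = p"
  proof (cases "?t x < ?t y")
    case True
    then show ?thesis using xy unfolding sig_def by (simp add: swp_inv)
  next
    case False
    then have "?t y < ?t x" using ne by auto
    then show ?thesis using xy unfolding sig_def by (simp add: swp_inv min_def max_def)
  qed
  show ?thesis using 1 2 by simp
qed

lemma sum_sig:
  assumes "1 \<le> a" "a + 1 \<le> int n"
  shows "(\<Sum>p\<in>PP n. f (sig a p)) = (\<Sum>p\<in>PP n. (f p :: int))"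
  by (rule sum.reindex_bij_witness[of _ "sig a" "sig a"]) (use sig_PP[OF assms] in auto)

lemma AA_swap:
  assumes "1 \<le> a" "a + 1 \<le> int n" "\<forall>x\<in>{1..int n}. \<pi>' x = \<pi> (swp a (a + 1) x)"
  shows "AA n \<pi>' = AA n \<pi> - Iv \<pi> (a, a + 1) + (if \<pi> (a + 1) > \<pi> a then 1 else 0)"
proof -
  let ?t = "swp a (a + 1)"
  have ab: "(a, a + 1) \<in> PP n" using assms unfolding PP_def by auto
  have sab: "sig a (a, a + 1) = (a, a + 1)" unfolding sig_def swp_def by auto
  have H: "Hv \<pi>' p = Hv \<pi> (sig a p)" if hp: "p \<in> PP n" for p
  proof -
    obtain x y where xy: "p = (x, y)" "1 \<le> x" "x < y" "y \<le> int n" using hp by (cases p) (auto simp: PP_def)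
    have "\<pi>' x = \<pi> (?t x)" "\<pi>' y = \<pi> (?t y)" using assms(3) xy by auto
    then show ?thesis using xy unfolding Hv_def sig_def by (auto simp: min_def max_def)
  qed
  have I: "Iv \<pi>' p = Iv \<pi> (sig a p)" if hp: "p \<in> PP n" and hq: "p \<noteq> (a, a + 1)" for p
  proof -
    obtain x y where xy: "p = (x, y)" "1 \<le> x" "x < y" "y \<le> int n" using hp by (cases p) (auto simp: PP_def)
    have "\<pi>' x = \<pi> (?t x)" "\<pi>' y = \<pi> (?t y)" using assms(3) xy by auto
    moreover have "?t x < ?t y" using swp_order xy hq by auto
    ultimately show ?thesis using xy unfolding Iv_def sig_def by auto
  qed
  have Iab: "Iv \<pi>' (a, a + 1) = (if \<pi> (a + 1) > \<pi> a then 1 else 0)"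
  proof -
    have "\<pi>' a = \<pi> (a + 1)" "\<pi>' (a + 1) = \<pi> a" using assms unfolding swp_def by auto
    then show ?thesis unfolding Iv_def by simp
  qed
  have sH: "(\<Sum>p\<in>PP n. Hv \<pi>' p) = (\<Sum>p\<in>PP n. Hv \<pi> p)"
    using H sum_sig[OF assms(1,2), of "Hv \<pi>"] by simp
  have "(\<Sum>p\<in>PP n. Iv \<pi>' p) = Iv \<pi>' (a, a + 1) + (\<Sum>p\<in>PP n - {(a, a + 1)}. Iv \<pi>' p)"
    using sum.remove[OF PP_finite ab] by simp
  also have "(\<Sum>p\<in>PP n - {(a, a + 1)}. Iv \<pi>' p) = (\<Sum>p\<in>PP n - {(a, a + 1)}. Iv \<pi> (sig a p))"
    using I by (intro sum.cong) auto
  also have "\<dots> = (\<Sum>p\<in>PP n. Iv \<pi> (sig a p)) - Iv \<pi> (a, a + 1)"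
    using sum.remove[OF PP_finite ab, of "\<lambda>p. Iv \<pi> (sig a p)"] sab by simp
  also have "(\<Sum>p\<in>PP n. Iv \<pi> (sig a p)) = (\<Sum>p\<in>PP n. Iv \<pi> p)"
    using sum_sig[OF assms(1,2)] by simp
  finally have sI: "(\<Sum>p\<in>PP n. Iv \<pi>' p) = (if \<pi> (a + 1) > \<pi> a then 1 else 0) + ((\<Sum>p\<in>PP n. Iv \<pi> p) - Iv \<pi> (a, a + 1))"
    using Iab by simp
  show ?thesis unfolding AA_def sum.distrib sI sH by simp
qed

lemma NN_swap:
  assumes "1 \<le> a" "a + 1 \<le> int n" "\<forall>x\<in>{1..int n}. \<pi>' x = \<pi> (swp a (a + 1) x)"
  shows "NN n \<pi>' = NN n \<pi>"
  unfolding NN_def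
  by (rule sum.reindex_bij_witness[of _ "swp a (a + 1)" "swp a (a + 1)"])
     (use assms swp_range[OF assms(1,2)] swp_inv in auto)



lemma foldr_comp: "foldr (\<lambda>i f. s i \<circ> f) w g = foldr (\<lambda>i f. s i \<circ> f) w id \<circ> g"
  by (induction w) auto

lemma wprod_Nil[simp]: "wprod s [] = id" by (simp add: wprod_def)

lemma wprod_snoc: "wprod s (w @ [i]) = wprod s w \<circ> s i"
  unfolding wprod_def by (simp add: foldr_comp[of s w "s i"])

lemma sB_inv_pt: "1 \<le> i \<Longrightarrow> sB i (sB i x) = x"
proof (cases "i = 1")
  case True then show ?thesis by (simp add: sB_def swp_inv)
next
  case False
  assume "1 \<le> i"
  then have i: "2 \<le> i" using False by auto
  let ?A = "swp (- int i) (- int i + 1)" and ?B = "swp (int i - 1) (int i)"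
  have e: "sB i y = ?A (?B y)" for y using False by (simp add: sB_def)
  have Af: "y \<ge> 1 \<Longrightarrow> ?A y = y" for y using i by (auto simp: swp_def)
  have Bf: "y \<le> 0 \<Longrightarrow> ?B y = y" for y using i by (auto simp: swp_def)
  have Bp: "y \<ge> 1 \<Longrightarrow> ?B y \<ge> 1" for y using i by (auto simp: swp_def)
  have An: "y \<le> 0 \<Longrightarrow> ?A y \<le> 0" for y using i by (auto simp: swp_def)
  show ?thesis
  proof (cases "x \<ge> 1")
    case True
    then show ?thesis unfolding e using Af Bp swp_inv by metis
  next
    case False
    then have "x \<le> 0" by simp
    then show ?thesis unfolding e using Bf An swp_inv by metis
  qed
qed

lemma sB_inv: "1 \<le> i \<Longrightarrow> sB i \<circ> sB i = id"
  using sB_inv_pt by (auto simp: fun_eq_iff)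

lemma sB_odd: "1 \<le> i \<Longrightarrow> sB i (- x) = - sB i x"
  unfolding sB_def swp_def by auto

lemma sB_fix: "1 \<le> i \<Longrightarrow> i \<le> n \<Longrightarrow> \<bar>x\<bar> > int n \<Longrightarrow> sB i x = x"
  unfolding sB_def swp_def by auto

lemma sB_pos: "2 \<le> i \<Longrightarrow> 1 \<le> x \<Longrightarrow> sB i x = swp (int i - 1) (int i - 1 + 1) x"
  unfolding sB_def swp_def by auto

lemma sB1_1: "sB 1 1 = -1" unfolding sB_def swp_def by simp
lemma sB1_pos: "2 \<le> x \<Longrightarrow> sB 1 x = x" unfolding sB_def swp_def by simp

lemma SP_comp:
  assumes "\<pi> \<in> signed_perms n" "i \<in> {1..n}"
  shows "\<pi> \<circ> sB i \<in> signed_perms n"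
proof -
  have "bij (sB i)" using sB_inv[of i] assms(2) by (metis o_bij atLeastAtMost_iff)
  then have "bij (\<pi> \<circ> sB i)" using assms(1) unfolding signed_perms_def by (auto intro: bij_comp)
  moreover have "\<forall>x. (\<pi> \<circ> sB i) (- x) = - (\<pi> \<circ> sB i) x"
    using assms sB_odd unfolding signed_perms_def by simp
  moreover have "\<forall>x. \<bar>x\<bar> > int n \<longrightarrow> (\<pi> \<circ> sB i) x = x"
    using assms sB_fix unfolding signed_perms_def by auto
  ultimately show ?thesis unfolding signed_perms_def by blast
qed

lemma SP_id: "id \<in> signed_perms n"
  unfolding signed_perms_def by auto

lemma step_s1:
  assumes "\<pi> \<in> signed_perms n" "1 \<le> n"
  shows "AA n (\<pi> \<circ> sB 1) = AA n \<pi> \<and>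
    NN n (\<pi> \<circ> sB 1) = NN n \<pi> - (if \<pi> 1 < 0 then 1 else 0) + (if \<pi> 1 > 0 then 1 else 0)"
proof -
  have o: "\<pi> (-1) = - \<pi> 1" using assms(1) unfolding signed_perms_def by auto
  have a: "(\<pi> \<circ> sB 1) 1 = - \<pi> 1" using o sB1_1 by simp
  have b: "\<forall>x\<in>{2..int n}. (\<pi> \<circ> sB 1) x = \<pi> x" using sB1_pos by auto
  show ?thesis using AA_s1[OF a b] NN_s1[OF assms(2) a b] by blast
qed

lemma step_si:
  assumes "2 \<le> i" "i \<le> n"
  shows "AA n (\<pi> \<circ> sB i) = AA n \<pi> - Iv \<pi> (int i - 1, int i - 1 + 1) + (if \<pi> (int i - 1 + 1) > \<pi> (int i - 1) then 1 else 0) \<and>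
    NN n (\<pi> \<circ> sB i) = NN n \<pi>"
proof -
  have a1: "1 \<le> int i - 1" "int i - 1 + 1 \<le> int n" using assms by auto
  have c: "\<forall>x\<in>{1..int n}. (\<pi> \<circ> sB i) x = \<pi> (swp (int i - 1) (int i - 1 + 1) x)"
    using sB_pos[OF assms(1)] by auto
  show ?thesis using AA_swap[OF a1 c] NN_swap[OF a1 c] by blast
qed

lemma oB_snoc: "oB (w @ [i]) = oB w + (if i = 1 then 1 else 0)"
  unfolding oB_def by simp

lemma lower_bound:
  assumes "set w \<subseteq> {1..n}"
  shows "wprod sB w \<in> signed_perms n \<and> int (oB w) - NN n (wprod sB w) \<ge> 0 \<and>
    int (length w) - LL n (wprod sB w) \<ge> int (oB w) - NN n (wprod sB w)"
  using assms
proof (induction w rule: rev_induct)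
  case Nil
  have N0: "NN n id = 0" unfolding NN_def by (rule sum.neutral) auto
  have o: "oB [] = 0" by (simp add: oB_def)
  show ?case by (simp only: wprod_Nil o SP_id LL_id N0 list.size) simp
next
  case (snoc i w)
  let ?\<pi> = "wprod sB w"
  have IH: "?\<pi> \<in> signed_perms n" "int (oB w) - NN n ?\<pi> \<ge> 0"
    "int (length w) - LL n ?\<pi> \<ge> int (oB w) - NN n ?\<pi>" using snoc by auto
  have i: "i \<in> {1..n}" using snoc.prems by auto
  have W: "wprod sB (w @ [i]) = ?\<pi> \<circ> sB i" by (rule wprod_snoc)
  define p' where "p' = ?\<pi> \<circ> sB i"
  have SP: "p' \<in> signed_perms n" using SP_comp[OF IH(1) i] unfolding p'_def .
  have o: "int (oB (w @ [i])) = int (oB w) + (if i = 1 then 1 else 0)" by (simp add: oB_snoc)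
  have l: "int (length (w @ [i])) = int (length w) + 1" by simp
  show ?case unfolding W p'_def[symmetric] o l
  proof (cases "i = 1")
    case True
    have "1 \<le> n" using i by auto
    from step_s1[OF IH(1) this] have "AA n p' = AA n ?\<pi>"
      "NN n p' = NN n ?\<pi> - (if ?\<pi> 1 < 0 then 1 else 0) + (if ?\<pi> 1 > 0 then 1 else 0)"
      unfolding p'_def True by auto
    then show "p' \<in> signed_perms n \<and> 0 \<le> int (oB w) + (if i = 1 then 1 else 0) - NN n p' \<and>
      int (oB w) + (if i = 1 then 1 else 0) - NN n p' \<le> int (length w) + 1 - LL n p'"
      using IH SP True unfolding LL_def by auto
  next
    case False
    then have "2 \<le> i" "i \<le> n" using i by auto
    from step_si[OF this, of ?\<pi>] have "AA n p' = AA n ?\<pi> - Iv ?\<pi> (int i - 1, int i - 1 + 1) + (if ?\<pi> (int i - 1 + 1) > ?\<pi> (int i - 1) then 1 else 0)"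
      "NN n p' = NN n ?\<pi>" unfolding p'_def by auto
    then show "p' \<in> signed_perms n \<and> 0 \<le> int (oB w) + (if i = 1 then 1 else 0) - NN n p' \<and>
      int (oB w) + (if i = 1 then 1 else 0) - NN n p' \<le> int (length w) + 1 - LL n p'"
      using IH SP False unfolding LL_def Iv_def by auto
  qed
qed



lemma incr_bound:
  fixes f :: "nat \<Rightarrow> int"
  assumes "\<forall>a. 1 \<le> a \<and> a + 1 \<le> n \<longrightarrow> f a < f (a + 1)"
  shows "1 \<le> k \<Longrightarrow> k + d \<le> n \<Longrightarrow> f (k + d) \<ge> f k + int d"
proof (induction d)
  case 0 then show ?case by simp
next
  case (Suc d)
  have "f (k + d) < f (k + d + 1)" using assms Suc.prems by auto
  then show ?case using Suc by auto
qed

lemma descent: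
  assumes SP: "\<pi> \<in> signed_perms n" and ne: "\<pi> \<noteq> id"
  shows "\<exists>i\<in>{1..n}. LL n (\<pi> \<circ> sB i) < LL n \<pi>"
proof (rule ccontr)
  assume H: "\<not> (\<exists>i\<in>{1..n}. LL n (\<pi> \<circ> sB i) < LL n \<pi>)"
  have odd: "\<And>x. \<pi> (- x) = - \<pi> x" and fx: "\<And>x. \<bar>x\<bar> > int n \<Longrightarrow> \<pi> x = x" and bj: "bij \<pi>"
    using SP unfolding signed_perms_def by auto
  have inj: "inj \<pi>" using bj bij_is_inj by auto
  have p0: "\<pi> 0 = 0" using odd[of 0] by simp
  have bound: "\<bar>\<pi> x\<bar> \<le> int n" if "\<bar>x\<bar> \<le> int n" for x
  proof (rule ccontr)
    assume "\<not> \<bar>\<pi> x\<bar> \<le> int n"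
    then have "\<pi> (\<pi> x) = \<pi> x" using fx by auto
    then have "\<pi> x = x" using inj by (meson injD)
    then show False using that \<open>\<not> \<bar>\<pi> x\<bar> \<le> int n\<close> by simp
  qed
  have pos1: "\<pi> 1 > 0" if "1 \<le> n"
  proof -
    have "\<not> \<pi> 1 < 0"
    proof
      assume neg: "\<pi> 1 < 0"
      have "LL n (\<pi> \<circ> sB 1) < LL n \<pi>"
        using step_s1[OF SP that] neg unfolding LL_def by auto
      then show False using H that by auto
    qed
    moreover have "\<pi> 1 \<noteq> 0" using p0 inj by (metis injD zero_neq_one)
    ultimately show ?thesis by simp
  qed
  have incr: "\<forall>a. 1 \<le> a \<and> a + 1 \<le> n \<longrightarrow> (\<lambda>m. \<pi> (int m)) a < (\<lambda>m. \<pi> (int m)) (a + 1)"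
  proof (intro allI impI)
    fix a assume a: "1 \<le> a \<and> a + 1 \<le> n"
    have "\<not> \<pi> (int a) > \<pi> (int a + 1)"
    proof
      assume gt: "\<pi> (int a) > \<pi> (int a + 1)"
      have "2 \<le> a + 1" "a + 1 \<le> n" using a by auto
      from step_si[OF this, of \<pi>] have "LL n (\<pi> \<circ> sB (a + 1)) < LL n \<pi>"
        using gt unfolding LL_def Iv_def by auto
      then show False using H a by auto
    qed
    moreover have "\<pi> (int a) \<noteq> \<pi> (int a + 1)" using inj by (metis injD n_not_Suc_n of_nat_Suc of_nat_eq_iff add.commute)
    ultimately show "(\<lambda>m. \<pi> (int m)) a < (\<lambda>m. \<pi> (int m)) (a + 1)" by (simp add: add.commute)
  qed
  have idk: "\<pi> (int k) = int k" if "1 \<le> k" "k \<le> n" for k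
  proof -
    have "\<pi> (int (1 + (k - 1))) \<ge> \<pi> (int 1) + int (k - 1)"
      using incr_bound[OF incr, of 1 "k - 1"] that by simp
    moreover have "\<pi> 1 > 0" using pos1 that by simp
    ultimately have lo: "\<pi> (int k) \<ge> int k" using that by (simp add: of_nat_diff)
    have "\<pi> (int (k + (n - k))) \<ge> \<pi> (int k) + int (n - k)"
      using incr_bound[OF incr, of k "n - k"] that by simp
    moreover have "\<pi> (int n) \<le> int n" using bound[of "int n"] by simp
    ultimately have hi: "\<pi> (int k) \<le> int k" using that by (simp add: of_nat_diff)
    show ?thesis using lo hi by simp
  qed
  have "\<pi> = id"
  proof
    fix x
    show "\<pi> x = id x"
    proof (cases "\<bar>x\<bar> > int n")
      case True then show ?thesis using fx by simp
    next
      case False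
      show ?thesis
      proof (cases "x > 0")
        case True
        then show ?thesis using idk[of "nat x"] False by simp
      next
        case f2: False
        show ?thesis
        proof (cases "x = 0")
          case True then show ?thesis using p0 by simp
        next
          case False
          then have "- x > 0" using f2 by simp
          then have "\<pi> (- x) = - x" using idk[of "nat (- x)"] \<open>\<not> \<bar>x\<bar> > int n\<close> by simp
          then show ?thesis using odd[of x] by simp
        qed
      qed
    qed
  qed
  then show False using ne by simp
qed

lemma exist_word:
  assumes "\<pi> \<in> signed_perms n"
  shows "\<exists>w. set w \<subseteq> {1..n} \<and> wprod sB w = \<pi> \<and> int (length w) \<le> LL n \<pi>"
  using assms
proof (induction "nat (LL n \<pi>)" arbitrary: \<pi> rule: less_induct)
  case less
  show ?case
  proof (cases "\<pi> = id")
    case True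
    then show ?thesis using LL_nonneg[of n \<pi>] by (intro exI[of _ "[]"]) simp
  next
    case False
    obtain i where i: "i \<in> {1..n}" "LL n (\<pi> \<circ> sB i) < LL n \<pi>" using descent[OF less.prems False] by blast
    have SP': "\<pi> \<circ> sB i \<in> signed_perms n" using SP_comp[OF less.prems i(1)] .
    have "nat (LL n (\<pi> \<circ> sB i)) < nat (LL n \<pi>)" using i(2) LL_nonneg[of n "\<pi> \<circ> sB i"] by simp
    then obtain w where w: "set w \<subseteq> {1..n}" "wprod sB w = \<pi> \<circ> sB i" "int (length w) \<le> LL n (\<pi> \<circ> sB i)"
      using less.hyps SP' by blast
    have "wprod sB (w @ [i]) = \<pi> \<circ> (sB i \<circ> sB i)" using w(2) by (simp add: wprod_snoc o_assoc)
    also have "\<dots> = \<pi>" using sB_inv[of i] i(1) by simp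
    finally show ?thesis using w i by (intro exI[of _ "w @ [i]"]) auto
  qed
qed

lemma oB_reduced:
  assumes "\<pi> \<in> signed_perms n" "w \<in> RB n \<pi>"
  shows "oB w = ell0 n \<pi>"
proof -
  have w: "set w \<subseteq> {1..n}" "wprod sB w = \<pi>" "length w = lenB n \<pi>"
    using assms(2) unfolding redwords_def by auto
  obtain w0 where w0: "set w0 \<subseteq> {1..n}" "wprod sB w0 = \<pi>" "int (length w0) \<le> LL n \<pi>"
    using exist_word[OF assms(1)] by blast
  have "lenB n \<pi> \<le> length w0" unfolding coxlen_def
    by (rule Least_le) (use w0 in auto)
  then have "int (length w) \<le> LL n \<pi>" using w(3) w0(3) by linarith
  moreover have "int (oB w) - NN n \<pi> \<ge> 0 \<and> int (length w) - LL n \<pi> \<ge> int (oB w) - NN n \<pi>"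
    using lower_bound[OF w(1)] w(2) by simp
  ultimately have "int (oB w) = NN n \<pi>" by linarith
  then show ?thesis using NN_ell0 by simp
qed



lemma RW_finite: "finite (redwords s n \<pi>)"
proof (rule finite_subset)
  show "redwords s n \<pi> \<subseteq> {w. set w \<subseteq> {1..n} \<and> length w = coxlen s n \<pi>}"
    unfolding redwords_def by auto
  show "finite {w. set w \<subseteq> {1..n} \<and> length w = coxlen s n \<pi>}"
    by (rule finite_lists_length_eq) simp
qed

lemma linext_bracket:
  assumes "finite R"
  shows "linext f (\<lambda>(w, m). if m = n \<and> w \<in> R then 1 else 0) \<mu> = (\<Sum>w\<in>R. f w n \<mu>)"
proof -
  let ?X = "(\<lambda>(w, m). if m = n \<and> w \<in> R then 1 else 0) :: 'a W"
  have S: "{p. ?X p \<noteq> 0} = (\<lambda>w. (w, n)) ` R" by (auto split: if_splits)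
  have "linext f ?X \<mu> = (\<Sum>p\<in>(\<lambda>w. (w, n)) ` R. ?X p * f (fst p) (snd p) \<mu>)"
    unfolding linext_def S ..
  also have "\<dots> = (\<Sum>w\<in>R. ?X (w, n) * f w n \<mu>)"
    by (subst sum.reindex) (auto simp: inj_on_def)
  also have "\<dots> = (\<Sum>w\<in>R. f w n \<mu>)" by (rule sum.cong) auto
  finally show ?thesis .
qed

lemma powi_split: "inverse ((2::'k::field_char_0) ^ e) * 2 ^ c = 2 powi (int c - int e)"
  by (simp add: power_int_diff divide_inverse mult.commute)

theorem proposition6p13:
  fixes n :: nat and \<pi> :: "int \<Rightarrow> int"
  assumes "\<pi> \<in> signed_perms n"
  shows "PsiB (bracketB n \<pi>) = (FB n \<pi> :: 'k::field_char_0 series) \<and>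
         PsiC (bracketB n \<pi>) = (FC n \<pi> :: 'k series) \<and>
         PsiD (bracketD n \<pi>) = (FD n \<pi> :: 'k series)"
proof (intro conjI ext)
  fix \<mu> :: "nat multiset"
  have lB: "lenB n \<pi> = length w" if "w \<in> RB n \<pi>" for w using that unfolding redwords_def by auto
  have lD: "lenD n \<pi> = length w" if "w \<in> RD n \<pi>" for w using that unfolding redwords_def by auto
  have K: "Psi_basis w \<mu> = (\<Sum>is\<in>adm (length w) w \<mu>. (2::'k) ^ card (set is))" for w
    using key_K by blast
  show "PsiB (bracketB n \<pi>) \<mu> = (FB n \<pi> \<mu> :: 'k)"
    unfolding PsiB_def bracketB_def linext_bracket[OF RW_finite] FB_def
  proof (rule sum.cong[OF refl])
    fix w assume w: "w \<in> RB n \<pi>"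
    show "inverse (2 ^ oB w) * Psi_basis w \<mu> = (\<Sum>is\<in>adm (lenB n \<pi>) w \<mu>. (2::'k) powi (int (card (set is)) - int (ell0 n \<pi>)))"
      unfolding K lB[OF w] oB_reduced[OF assms w] sum_distrib_left powi_split ..
  qed
  show "PsiC (bracketB n \<pi>) \<mu> = (FC n \<pi> \<mu> :: 'k)"
    unfolding PsiC_def bracketB_def linext_bracket[OF RW_finite] FC_def FB_def sum_distrib_left
  proof (rule sum.cong[OF refl])
    fix w assume w: "w \<in> RB n \<pi>"
    show "Psi_basis w \<mu> = (\<Sum>is\<in>adm (lenB n \<pi>) w \<mu>. (2::'k) ^ ell0 n \<pi> * 2 powi (int (card (set is)) - int (ell0 n \<pi>)))"
      unfolding K lB[OF w]
      by (rule sum.cong[OF refl]) (simp add: power_int_diff)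
  qed
  show "PsiD (bracketD n \<pi>) \<mu> = (FD n \<pi> \<mu> :: 'k)"
    unfolding PsiD_def bracketD_def linext_bracket[OF RW_finite] FD_def
  proof (rule sum.cong[OF refl])
    fix w assume w: "w \<in> RD n \<pi>"
    show "inverse (2 ^ oD w) * Psi_basis w \<mu> = (\<Sum>is\<in>adm (lenD n \<pi>) w \<mu>. (2::'k) powi (int (card (set is)) - int (oD w)))"
      unfolding K lD[OF w] sum_distrib_left powi_split ..
  qed
qed

end
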